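(* Let $N, M \ge 1$ be integers, let $t_1,\ldots,t_N$ be real time points and $f_1,\ldots,f_M$ real frequencies, and let $B\in\mathbb{C}^{N\times M}$ have entries $B_{k,m}=\exp(-i2\pi f_m t_k)$. Let $A=\left[\mathbf{1}_N\ \ \mathrm{Re}(B)\ \ \mathrm{Im}(B)\right]\in\mathbb{R}^{N\times(2M+1)}$, where $\mathbf{1}_N$ is the all-ones column vector. Let $\sigma^2>0$, let $\alpha_0,\alpha_1,\ldots,\alpha_M>0$, and let $\Gamma=\mathrm{diag}(\alpha_0,\alpha_1,\ldots,\alpha_M,\alpha_1,\ldots,\alpha_M)$. Let $\Omega=\{1,\ldots,N\}$. For $J\subseteq\Omega$ let $P_J\in\mathbb{R}^{N\times N}$ be the diagonal matrix with $(P_J)_{kk}=1$ if $k\in J$ and $0$ otherwise, and define $$\Sigma^{(J)}_{post_y}=\sigma^2 I_N + A\left(\tfrac{1}{\sigma^2}A^TP_JA+\Gamma^{-1}\right)^{-1}A^T,\qquad \Sigma_y=\sigma^2 I_N + A\Gamma A^T,$$ $$f(J)=\mathrm{tr}(\Sigma_y)-\mathrm{tr}\left(\Sigma^{(J)}_{post_y}\right),$$ and for $i\in\Omega$ the marginal gain $f_i(J)=f(J\cup\{i\})-f(J)$. Then $f_i(J)>0$ for all $J\subset\Omega$ and all $i\in\Omega\setminus J$.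
   Context: Here $\mathrm{Re}(B)$ and $\mathrm{Im}(B)$ denote the entrywise real and imaginary parts of $B$, and $\mathrm{tr}$ denotes the matrix trace. The matrix $\Sigma^{(J)}_{post_y}$ is the posterior predictive covariance of a Bayesian linear model $Y=AX+\text{noise}$ with prior covariance $\Gamma$ on $X$, noise variance $\sigma^2$, and observations only at the time indices in $J$. *)

theory Defs
  imports "HOL-Analysis.Analysis"
begin

text \<open>Time indices are the finite type 'n (so N = CARD('n)), frequency indices the finite
type 'm (M = CARD('m)). Columns of A are indexed by unit + 'm + 'm:
Inl () is the all-ones column, Inr (Inl m) the Re(B) columns, Inr (Inr m) the Im(B) columns.\<close>

type_synonym 'm col = "unit + 'm + 'm"

definition Bmat :: "('n \<Rightarrow> real) \<Rightarrow> ('m \<Rightarrow> real) \<Rightarrow> complex^'m^'n" where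
  "Bmat t f = (\<chi> k m. exp (- (\<i> * complex_of_real (2 * pi * f m * t k))))"

definition Amat :: "('n::finite \<Rightarrow> real) \<Rightarrow> ('m::finite \<Rightarrow> real) \<Rightarrow> real^('m col)^'n" where
  "Amat t f = (\<chi> k c. case c of
       Inl _ \<Rightarrow> 1
     | Inr (Inl m) \<Rightarrow> Re (Bmat t f $ k $ m)
     | Inr (Inr m) \<Rightarrow> Im (Bmat t f $ k $ m))"

definition Gamma :: "real \<Rightarrow> ('m::finite \<Rightarrow> real) \<Rightarrow> real^('m col)^('m col)" where
  "Gamma a0 a = (\<chi> i j. if i = j then
       (case i of Inl _ \<Rightarrow> a0 | Inr (Inl m) \<Rightarrow> a m | Inr (Inr m) \<Rightarrow> a m) else 0)"

definition Pmat :: "'n::finite set \<Rightarrow> real^'n^'n" where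
  "Pmat J = (\<chi> i j. if i = j \<and> i \<in> J then 1 else 0)"

definition Sigma_post :: "('n::finite \<Rightarrow> real) \<Rightarrow> ('m::finite \<Rightarrow> real) \<Rightarrow> real \<Rightarrow> real
    \<Rightarrow> ('m \<Rightarrow> real) \<Rightarrow> 'n set \<Rightarrow> real^'n^'n" where
  "Sigma_post t f s2 a0 a J =
     s2 *\<^sub>R mat 1 + Amat t f ** matrix_inv ((1 / s2) *\<^sub>R (transpose (Amat t f) ** Pmat J ** Amat t f)
        + matrix_inv (Gamma a0 a)) ** transpose (Amat t f)"

definition Sigma_y :: "('n::finite \<Rightarrow> real) \<Rightarrow> ('m::finite \<Rightarrow> real) \<Rightarrow> real \<Rightarrow> real
    \<Rightarrow> ('m \<Rightarrow> real) \<Rightarrow> real^'n^'n" where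
  "Sigma_y t f s2 a0 a = s2 *\<^sub>R mat 1 + Amat t f ** Gamma a0 a ** transpose (Amat t f)"

definition fJ :: "('n::finite \<Rightarrow> real) \<Rightarrow> ('m::finite \<Rightarrow> real) \<Rightarrow> real
    \<Rightarrow> real \<Rightarrow> ('m \<Rightarrow> real) \<Rightarrow> 'n set \<Rightarrow> real" where
  "fJ t f s2 a0 a J = trace (Sigma_y t f s2 a0 a) - trace (Sigma_post t f s2 a0 a J)"

definition marginal_gain :: "('n::finite \<Rightarrow> real) \<Rightarrow> ('m::finite \<Rightarrow> real) \<Rightarrow> real
    \<Rightarrow> real \<Rightarrow> ('m \<Rightarrow> real) \<Rightarrow> 'n \<Rightarrow> 'n set \<Rightarrow> real" where
  "marginal_gain t f s2 a0 a i J = fJ t f s2 a0 a (J \<union> {i}) - fJ t f s2 a0 a J"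

end

theory Submission
  imports Defs
begin

definition outer :: "real^'c \<Rightarrow> real^'d \<Rightarrow> real^'d^'c" where
  "outer u v = (\<chi> i j. u$i * v$j)"

lemma minv:
  fixes A :: "'a::field^'n^'n"
  assumes "invertible A"
  shows "A ** matrix_inv A = mat 1 \<and> matrix_inv A ** A = mat 1"
  using assms unfolding invertible_def matrix_inv_def by (rule someI_ex)

lemma minv_unique:
  fixes A B :: "'a::field^'n^'n"
  assumes "B ** A = mat 1"
  shows "matrix_inv A = B"
proof -
  have AB: "A ** B = mat 1" using assms matrix_left_right_inverse by blast
  have inv: "invertible A" using assms invertible_left_inverse by blast
  have "matrix_inv A = matrix_inv A ** (A ** B)" by (simp add: AB)
  also have "\<dots> = (matrix_inv A ** A) ** B" by (simp add: matrix_mul_assoc)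
  also have "\<dots> = B" using minv[OF inv] by simp
  finally show ?thesis .
qed

lemma pd_invertible:
  fixes Q :: "real^'n^'n"
  assumes "\<forall>x. x \<noteq> 0 \<longrightarrow> x \<bullet> (Q *v x) > 0"
  shows "invertible Q"
proof -
  have "\<forall>x. Q *v x = 0 \<longrightarrow> x = 0" using assms by force
  then show ?thesis unfolding invertible_left_inverse matrix_left_invertible_ker .
qed

lemma sym_inv:
  fixes Q :: "real^'n^'n"
  assumes "transpose Q = Q" "invertible Q"
  shows "transpose (matrix_inv Q) = matrix_inv Q"
proof -
  have "transpose (matrix_inv Q) ** Q = transpose (transpose Q ** matrix_inv Q)"
    by (simp add: matrix_transpose_mul)
  also have "\<dots> = mat 1" using assms minv[OF assms(2)] by (simp add: transpose_mat)
  finally show ?thesis using minv_unique by metis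
qed

lemma outer_mult_right: "outer u v ** B = outer u (transpose B *v v)"
  by (simp add: outer_def vec_eq_iff matrix_matrix_mult_def matrix_vector_mult_def
      transpose_def sum_distrib_left mult.assoc mult.commute mult.left_commute)

lemma outer_mult_left: "B ** outer u v = outer (B *v u) v"
  by (simp add: outer_def vec_eq_iff matrix_matrix_mult_def matrix_vector_mult_def
      sum_distrib_left mult.assoc mult.commute mult.left_commute)

lemma outer_mv: "outer u v *v w = (v \<bullet> w) *\<^sub>R u"
  by (simp add: outer_def vec_eq_iff matrix_vector_mult_def inner_vec_def
      sum_distrib_left mult.assoc mult.commute mult.left_commute)

lemma mv_comp: "(A *v u) $ k = A $ k \<bullet> u"
  by (simp add: matrix_vector_mult_def inner_vec_def mult.commute)


lemma mm_sub_l: "(A::real^'b^'a) ** (B - C) = A ** B - A ** C"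
  by (simp add: vec_eq_iff matrix_matrix_mult_def sum_subtractf algebra_simps)

lemma mm_sub_r: "((B::real^'b^'a) - C) ** A = B ** A - C ** A"
  by (simp add: vec_eq_iff matrix_matrix_mult_def sum_subtractf algebra_simps)

lemma mm_add_r: "((B::real^'b^'a) + C) ** A = B ** A + C ** A"
  by (simp add: vec_eq_iff matrix_matrix_mult_def sum.distrib algebra_simps)

lemma mm_scale_r: "(A::real^'b^'a) ** (k *\<^sub>R B) = k *\<^sub>R (A ** B)"
  by (simp add: vec_eq_iff matrix_matrix_mult_def sum_distrib_left algebra_simps)

lemma mm_scale_l: "(k *\<^sub>R (A::real^'b^'a)) ** B = k *\<^sub>R (A ** B)"
  by (simp add: vec_eq_iff matrix_matrix_mult_def sum_distrib_left algebra_simps)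

lemma main_gen:
  fixes Q :: "real^'c^'c" and A :: "real^'c^'n" and a :: "real^'c" and s :: real
  assumes symQ: "transpose Q = Q" and pd: "\<forall>x. x \<noteq> 0 \<longrightarrow> x \<bullet> (Q *v x) > 0"
    and a0: "a \<noteq> 0" and s0: "s > 0" and row: "A $ i = a"
  shows "trace (A ** matrix_inv (Q + (1/s) *\<^sub>R outer a a) ** transpose A)
       < trace (A ** matrix_inv Q ** transpose A)"
proof -
  define Q' where "Q' = Q + (1/s) *\<^sub>R outer a a"
  define X where "X = matrix_inv Q"
  define X' where "X' = matrix_inv Q'"
  define w where "w = X *v a"
  define c where "c = a \<bullet> w"
  have invQ: "invertible Q" using pd by (rule pd_invertible)
  have pd': "\<forall>x. x \<noteq> 0 \<longrightarrow> x \<bullet> (Q' *v x) > 0"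
  proof (intro allI impI)
    fix x :: "real^'c" assume "x \<noteq> 0"
    have "x \<bullet> (Q' *v x) = x \<bullet> (Q *v x) + (1/s) * (a \<bullet> x)^2"
      by (simp add: Q'_def matrix_vector_mult_add_rdistrib scaleR_matrix_vector_assoc[symmetric] outer_mv
          inner_add_right power2_eq_square inner_commute)
    moreover have "(1/s) * (a \<bullet> x)^2 \<ge> 0" using s0 by simp
    ultimately show "x \<bullet> (Q' *v x) > 0" using pd \<open>x \<noteq> 0\<close> by auto
  qed
  have invQ': "invertible Q'" using pd' by (rule pd_invertible)
  have QX: "Q ** X = mat 1" "X ** Q = mat 1" using minv[OF invQ] X_def by auto
  have QX': "Q' ** X' = mat 1" "X' ** Q' = mat 1" using minv[OF invQ'] X'_def by auto
  have symX: "transpose X = X" using sym_inv[OF symQ invQ] X_def by simp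
  have Qw: "Q *v w = a" unfolding w_def
    by (simp add: matrix_vector_mul_assoc QX)
  have w0: "w \<noteq> 0" using Qw a0 by auto
  have cpos: "c > 0"
  proof -
    have "c = w \<bullet> (Q *v w)" using Qw by (simp add: c_def inner_commute)
    then show ?thesis using pd w0 by auto
  qed
  have Q'w: "Q' *v w = (1 + c/s) *\<^sub>R a"
    by (simp add: Q'_def matrix_vector_mult_add_rdistrib scaleR_matrix_vector_assoc[symmetric] outer_mv
        Qw c_def algebra_simps)
  have X'a: "X' *v a = (1/(1 + c/s)) *\<^sub>R w"
  proof -
    have "w = X' *v (Q' *v w)" by (simp add: matrix_vector_mul_assoc QX')
    also have "\<dots> = (1 + c/s) *\<^sub>R (X' *v a)" by (simp add: Q'w matrix_vector_mult_scaleR)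
    finally have "w = (1 + c/s) *\<^sub>R (X' *v a)" .
    moreover have "1 + c/s \<noteq> 0" using cpos s0 by (smt (verit) divide_pos_pos)
    ultimately show ?thesis by simp
  qed
  have diff: "X - X' = X' ** (Q' - Q) ** X"
  proof -
    have "X' ** (Q' - Q) ** X = (X' ** Q') ** X - X' ** (Q ** X)"
      by (simp add: mm_sub_l mm_sub_r matrix_mul_assoc)
    also have "\<dots> = X - X'" by (simp add: QX QX')
    finally show ?thesis by simp
  qed
  have QQ: "Q' - Q = (1/s) *\<^sub>R outer a a" by (simp add: Q'_def)
  have diff2: "X - X' = (1/(s + c)) *\<^sub>R outer w w"
  proof -
    have "X - X' = (1/s) *\<^sub>R (X' ** outer a a ** X)"
      by (simp add: diff QQ mm_scale_r mm_scale_l)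
    also have "X' ** outer a a ** X = outer (X' *v a) w"
      by (simp add: outer_mult_left outer_mult_right symX w_def)
    also have "\<dots> = (1/(1 + c/s)) *\<^sub>R outer w w"
      by (simp add: X'a outer_def vec_eq_iff)
    also have "(1/s) *\<^sub>R ((1/(1 + c/s)) *\<^sub>R outer w w) = (1/(s + c)) *\<^sub>R outer w w"
      using s0 by (simp add: field_simps)
    finally show ?thesis .
  qed
  have tr: "trace (A ** X ** transpose A) - trace (A ** X' ** transpose A)
     = (1/(s+c)) * (\<Sum>k\<in>UNIV. (A $ k \<bullet> w)^2)"
  proof -
    have "trace (A ** X ** transpose A) - trace (A ** X' ** transpose A)
        = trace (A ** (X - X') ** transpose A)"
      by (simp add: trace_sub mm_sub_l mm_sub_r)
    also have "A ** (X - X') ** transpose A = (1/(s+c)) *\<^sub>R outer (A *v w) (A *v w)"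
      by (simp only: diff2 mm_scale_r mm_scale_l outer_mult_left outer_mult_right transpose_transpose)
    also have "trace \<dots> = (1/(s+c)) * (\<Sum>k\<in>UNIV. (A $ k \<bullet> w)^2)"
      unfolding trace_def outer_def by (simp add: mv_comp power2_eq_square sum_distrib_left)
    finally show ?thesis .
  qed
  have le: "(A $ i \<bullet> w)^2 \<le> (\<Sum>k\<in>UNIV. (A $ k \<bullet> w)^2)"
    by (rule member_le_sum) auto
  have gt: "(A $ i \<bullet> w)^2 > 0" using row cpos c_def by simp
  have Spos: "(\<Sum>k\<in>UNIV. (A $ k \<bullet> w)^2) > 0" using le gt by linarith
  have dpos: "1/(s+c) > 0" using s0 cpos by simp
  have "trace (A ** X ** transpose A) - trace (A ** X' ** transpose A) > 0"
    unfolding tr using Spos dpos by (rule mult_pos_pos[rotated])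
  then show ?thesis unfolding X_def X'_def Q'_def by simp
qed


lemma sd1: "(\<Sum>k\<in>UNIV. (if (i::'a::finite) = k then f k else 0) * (g k::real)) = f i * g i"
proof -
  have eq: "(\<lambda>k. (if i = k then f k else 0) * g k) = (\<lambda>k. if i = k then f k * g k else 0)" by auto
  show ?thesis unfolding eq by (simp add: sum.delta sum.delta')
qed

lemma sd2: "(\<Sum>k\<in>UNIV. if k = (j::'a::finite) \<and> P k then (f::real) else 0) = (if P j then f else 0)"
proof -
  have eq: "(\<lambda>k. if k = j \<and> P k then f else 0) = (\<lambda>k. if k = j then (if P j then f else 0) else 0)"
    by auto
  show ?thesis unfolding eq by (simp add: sum.delta sum.delta')
qed

lemma mult_if0: "(if P then a else 0) * b = (if P then a * b else (0::real))"
  by simp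

lemma sd3: "(\<Sum>k\<in>UNIV. if k \<in> (J::'a::finite set) then g k else (0::real)) = sum g J"
  by (simp add: sum.If_cases)

lemma TPA: "transpose (A::real^'c^'n) ** Pmat J ** A = (\<Sum>k\<in>J. outer (A$k) (A$k))"
proof -
  have 1: "transpose A ** Pmat J = (\<chi> c k. if k \<in> J then A$k$c else 0)"
    by (simp add: vec_eq_iff matrix_matrix_mult_def Pmat_def transpose_def if_distrib sd2
        cong: if_cong)
  show ?thesis unfolding 1
    by (simp add: vec_eq_iff matrix_matrix_mult_def outer_def mult_if0 sd3)
qed

lemma quad_outer_sum:
  fixes u :: "'k \<Rightarrow> real^'c"
  assumes "finite J"
  shows "x \<bullet> ((\<Sum>k\<in>J. outer (u k) (u k)) *v x) = (\<Sum>k\<in>J. (u k \<bullet> x)^2)"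
  using assms
proof (induction J rule: finite_induct)
  case empty
  then show ?case by (simp add: matrix_vector_mult_def vec_eq_iff inner_vec_def zero_vec_def)
next
  case (insert k J)
  then show ?case
    by (simp add: matrix_vector_mult_add_rdistrib outer_mv inner_add_right
        power2_eq_square inner_commute)
qed

definition gam :: "real \<Rightarrow> ('m \<Rightarrow> real) \<Rightarrow> 'm col \<Rightarrow> real" where
  "gam a0 a c = (case c of Inl _ \<Rightarrow> a0 | Inr (Inl m) \<Rightarrow> a m | Inr (Inr m) \<Rightarrow> a m)"

lemma Gamma_gam: "Gamma a0 a = (\<chi> i j. if i = j then gam a0 a i else 0)"
  unfolding Gamma_def gam_def by simp

lemma gam_pos: "a0 > 0 \<Longrightarrow> \<forall>m. a m > 0 \<Longrightarrow> gam a0 a c > 0"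
  unfolding gam_def by (auto split: sum.split)

lemma Gamma_inv:
  assumes "a0 > 0" "\<forall>m. a m > 0"
  shows "matrix_inv (Gamma a0 a :: real^('m::finite col)^('m col))
     = (\<chi> i j. if i = j then 1 / gam a0 a i else 0)"
proof (rule minv_unique)
  have ne: "\<And>c. gam a0 a c \<noteq> 0" using gam_pos[OF assms] by (metis less_irrefl)
  show "(\<chi> i j. if i = j then 1 / gam a0 a i else 0) ** Gamma a0 a = (mat 1 :: real^('m col)^('m col))"
    unfolding Gamma_gam
    by (simp add: vec_eq_iff matrix_matrix_mult_def mat_def sd1 ne)
qed


theorem lemma1:
  fixes t :: "'n::finite \<Rightarrow> real" and f :: "'m::finite \<Rightarrow> real"
    and s2 a0 :: real and a :: "'m \<Rightarrow> real" and J :: "'n set" and i :: 'n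
  assumes "s2 > 0" and "a0 > 0" and "\<forall>m. a m > 0"
    and "J \<subset> UNIV" and "i \<in> UNIV - J"
  shows "marginal_gain t f s2 a0 a i J > 0"
proof -
  define A where "A = Amat t f"
  define D where "D = matrix_inv (Gamma a0 a)"
  define Q where "Q = (1 / s2) *\<^sub>R (transpose A ** Pmat J ** A) + D"
  have Deq: "D = (\<chi> i j. if i = j then 1 / gam a0 a i else 0)"
    unfolding D_def using Gamma_inv[OF assms(2,3)] by simp
  have iJ: "i \<notin> J" using assms(5) by simp
  have Q': "(1 / s2) *\<^sub>R (transpose A ** Pmat (insert i J) ** A) + D
      = Q + (1/s2) *\<^sub>R outer (A$i) (A$i)"
    unfolding Q_def TPA using iJ by (simp add: scaleR_add_right)
  have symQ: "transpose Q = Q"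
    unfolding Q_def TPA Deq
    by (simp add: vec_eq_iff transpose_def outer_def mult.commute)
  have Dv: "(D *v x) $ c = x $ c / gam a0 a c" for x c
    unfolding Deq by (simp add: matrix_vector_mult_def sd1)
  have pd: "\<forall>x. x \<noteq> 0 \<longrightarrow> x \<bullet> (Q *v x) > 0"
  proof (intro allI impI)
    fix x :: "real^('m col)" assume "x \<noteq> 0"
    then obtain c where c: "x $ c \<noteq> 0" by (metis vec_eq_iff zero_index)
    have g: "gam a0 a d > 0" for d using gam_pos[OF assms(2,3)] by blast
    have "x \<bullet> (Q *v x) = (1/s2) * (x \<bullet> ((transpose A ** Pmat J ** A) *v x)) + x \<bullet> (D *v x)"
      unfolding Q_def
      by (simp add: matrix_vector_mult_add_rdistrib scaleR_matrix_vector_assoc[symmetric]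
          inner_add_right)
    also have "x \<bullet> ((transpose A ** Pmat J ** A) *v x) = (\<Sum>k\<in>J. (A$k \<bullet> x)^2)"
      unfolding TPA by (rule quad_outer_sum) simp
    also have "x \<bullet> (D *v x) = (\<Sum>d\<in>UNIV. x$d * (x$d / gam a0 a d))"
      by (simp add: inner_vec_def Dv)
    finally have eq: "x \<bullet> (Q *v x) = (1/s2) * (\<Sum>k\<in>J. (A$k \<bullet> x)^2)
        + (\<Sum>d\<in>UNIV. x$d * (x$d / gam a0 a d))" .
    have t1: "(1/s2) * (\<Sum>k\<in>J. (A$k \<bullet> x)^2) \<ge> 0"
      using assms(1) by (simp add: sum_nonneg)
    have nn: "\<And>d. x$d * (x$d / gam a0 a d) \<ge> 0"
      using g by (metis divide_nonneg_pos mult_nonneg_nonneg mult_nonpos_nonpos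
          divide_nonpos_pos linear)
    have "x$c * (x$c / gam a0 a c) > 0"
      using g[of c] c by (auto simp add: zero_less_mult_iff zero_less_divide_iff linorder_neq_iff)
    also have "\<dots> \<le> (\<Sum>d\<in>UNIV. x$d * (x$d / gam a0 a d))"
      by (rule member_le_sum) (use nn in auto)
    finally show "x \<bullet> (Q *v x) > 0" using eq t1 by linarith
  qed
  have a0': "A $ i \<noteq> 0"
  proof
    assume "A $ i = 0"
    then have "A $ i $ Inl () = 0" by simp
    then show False by (simp add: A_def Amat_def)
  qed
  have "trace (A ** matrix_inv (Q + (1/s2) *\<^sub>R outer (A$i) (A$i)) ** transpose A)
       < trace (A ** matrix_inv Q ** transpose A)"
    by (rule main_gen[OF symQ pd a0' assms(1) refl])
  then show ?thesis
    unfolding marginal_gain_def fJ_def Sigma_post_def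
    by (simp add: trace_add Q' flip: A_def D_def Q_def)
qed

end
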